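(* Let $A\in\mathbb{R}^{m\times n}$ with $\delta_{2k}<1$, let $x\in\mathbb{R}^n$, $\eta\in\mathbb{R}^m$, $y=Ax+\eta$, $S=\mathcal{L}_k(x)$ and $\eta'=Ax_{\overline S}+\eta$. Let $u\in\mathbb{R}^n$ be arbitrary, let $$w\in\arg\min_{w'}\{\|y-A(u\otimes w')\|_2^2:\ \mathbf e^Tw'=k,\ 0\le w'\le\mathbf e\},$$ and let $S'=\operatorname{supp}(\mathcal{H}_k(u\otimes w))$. Let $\hat w\in\{0,1\}^n$ be a $k$-sparse binary vector with $S\subseteq\operatorname{supp}(\hat w)$. Then (i) $$\|(x_S-u\otimes w)_{S\cup S'}\|_2\le\sqrt{\frac{1+\delta_k}{1-\delta_{2k}}}\|(x_S-u)\otimes\hat w\|_2+\frac{2}{\sqrt{1-\delta_{2k}}}\|\eta'\|_2+\frac{1}{\sqrt{1-\delta_{2k}}}\left\|A\left[(x_S-u\otimes w)_{\overline{S\cup S'}}\right]\right\|_2;$$ (ii) $$\left\|A\left[(x_S-u\otimes w)_{\overline{S\cup S'}}\right]\right\|_2\le2\sqrt{1+\delta_k}\,\|\mathcal{H}_k(u-x_S)\|_2 .$$ (In the paper, $u=u^p$ and $w=w^p$ are the iterates of the NTROT algorithm and $S'=\operatorname{supp}(x^{p+1})$.)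
   Context: Notation: $\|\cdot\|_2$ is the Euclidean norm; a vector is $k$-sparse if it has at most $k$ nonzero entries. For $\Omega\subseteq\{1,\dots,n\}$, $\overline\Omega$ is its complement and $x_\Omega$ is the vector obtained from $x$ by keeping the entries indexed by $\Omega$ and setting the others to zero. $\mathcal{L}_k(u)$ denotes the index set of the $k$ largest magnitudes of $u$ (ties broken arbitrarily), and $\mathcal{H}_k(u)=u_{\mathcal{L}_k(u)}$ is the hard thresholding operator (keeps the $k$ largest magnitudes, zeroes the rest). $u\otimes w$ is the entrywise (Hadamard) product; $\mathbf e=(1,\dots,1)^T$; inequalities between vectors are entrywise. The $q$-th order restricted isometry constant $\delta_q$ of $A$ is the smallest $\delta\ge0$ such that $(1-\delta)\|z\|_2^2\le\|Az\|_2^2\le(1+\delta)\|z\|_2^2$ for all $q$-sparse $z\in\mathbb{R}^n$. *)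

theory Defs
  imports "HOL-Analysis.Analysis"
begin

definition supp :: "real^'n \<Rightarrow> 'n set" where
  "supp z = {i. z $ i \<noteq> 0}"

definition sparse :: "nat \<Rightarrow> real^'n \<Rightarrow> bool" where
  "sparse k z \<longleftrightarrow> card (supp z) \<le> k"

definition restr :: "'n set \<Rightarrow> real^'n \<Rightarrow> real^'n" where
  "restr \<Omega> x = (\<chi> i. if i \<in> \<Omega> then x $ i else 0)"

definition had :: "real^'n \<Rightarrow> real^'n \<Rightarrow> real^'n" where
  "had u w = (\<chi> i. u $ i * w $ i)"

text \<open>Omega is an admissible value of L_k(u): an index set of k largest magnitudes
  (ties broken arbitrarily).\<close>
definition is_Lk :: "nat \<Rightarrow> real^'n \<Rightarrow> 'n set \<Rightarrow> bool" where
  "is_Lk k u \<Omega> \<longleftrightarrow> card \<Omega> = k \<and> (\<forall>i\<in>\<Omega>. \<forall>j. j \<notin> \<Omega> \<longrightarrow> \<bar>u $ j\<bar> \<le> \<bar>u $ i\<bar>)"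

definition ric :: "real^'n^'m \<Rightarrow> nat \<Rightarrow> real" where
  "ric A q = Inf {\<delta>. \<delta> \<ge> 0 \<and> (\<forall>z. sparse q z \<longrightarrow>
      (1 - \<delta>) * (norm z)\<^sup>2 \<le> (norm (A *v z))\<^sup>2 \<and> (norm (A *v z))\<^sup>2 \<le> (1 + \<delta>) * (norm z)\<^sup>2)}"

end

theory Submission
  imports Defs
begin


definition ricset :: "real^'n^'m \<Rightarrow> nat \<Rightarrow> real set" where
  "ricset A q = {\<delta>. \<delta> \<ge> 0 \<and> (\<forall>z. sparse q z \<longrightarrow>
      (1 - \<delta>) * (norm z)\<^sup>2 \<le> (norm (A *v z))\<^sup>2 \<and> (norm (A *v z))\<^sup>2 \<le> (1 + \<delta>) * (norm z)\<^sup>2)}"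

lemma ric_eq: "ric A q = Inf (ricset A q)"
  unfolding ric_def ricset_def by simp

lemma ricset_ne: "ricset (A::real^'n^'m) q \<noteq> {}"
proof -
  obtain C where C: "\<And>z. norm (A *v z) \<le> norm z * C"
    using bounded_linear.bounded[OF matrix_vector_mul_bounded_linear] by blast
  define d where "d = max 1 (C\<^sup>2)"
  have "d \<in> ricset A q"
    unfolding ricset_def
  proof (safe)
    show "0 \<le> d" by (simp add: d_def)
    fix z :: "real^'n"
    have "(1 - d) * (norm z)\<^sup>2 \<le> 0" by (simp add: d_def mult_nonpos_nonneg)
    also have "0 \<le> (norm (A *v z))\<^sup>2" by simp
    finally show "(1 - d) * (norm z)\<^sup>2 \<le> (norm (A *v z))\<^sup>2" .
    have "(norm (A *v z))\<^sup>2 \<le> (norm z * C)\<^sup>2"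
      using C[of z] by (simp add: power_mono)
    also have "\<dots> = C\<^sup>2 * (norm z)\<^sup>2" by (simp add: power_mult_distrib)
    also have "\<dots> \<le> (1 + d) * (norm z)\<^sup>2"
      by (intro mult_right_mono) (auto simp: d_def)
    finally show "(norm (A *v z))\<^sup>2 \<le> (1 + d) * (norm z)\<^sup>2" .
  qed
  then show ?thesis by blast
qed

lemma ricset_bdd: "bdd_below (ricset A q)"
  unfolding ricset_def by (rule bdd_belowI[of _ 0]) auto

lemma ric_nonneg: "0 \<le> ric A q"
  unfolding ric_eq by (rule cInf_greatest[OF ricset_ne]) (auto simp: ricset_def)

lemma ric_mono: "q \<le> r \<Longrightarrow> ric A q \<le> ric A r"
  unfolding ric_eq
  by (rule cInf_superset_mono[OF ricset_ne ricset_bdd]) (auto simp: ricset_def sparse_def)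

lemma ric_lower:
  assumes "sparse q z"
  shows "(1 - ric A q) * (norm z)\<^sup>2 \<le> (norm (A *v z))\<^sup>2"
proof (cases "z = 0")
  case True then show ?thesis by simp
next
  case False
  then have p: "(norm z)\<^sup>2 > 0" by simp
  have "1 - (norm (A *v z))\<^sup>2 / (norm z)\<^sup>2 \<le> ric A q"
    unfolding ric_eq
  proof (rule cInf_greatest[OF ricset_ne])
    fix d assume "d \<in> ricset A q"
    then have "(1 - d) * (norm z)\<^sup>2 \<le> (norm (A *v z))\<^sup>2" using assms by (auto simp: ricset_def)
    then show "1 - (norm (A *v z))\<^sup>2 / (norm z)\<^sup>2 \<le> d" using p by (simp add: field_simps)
  qed
  then show ?thesis using p by (simp add: field_simps)
qed

lemma ric_upper:
  assumes "sparse q z"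
  shows "(norm (A *v z))\<^sup>2 \<le> (1 + ric A q) * (norm z)\<^sup>2"
proof (cases "z = 0")
  case True then show ?thesis by simp
next
  case False
  then have p: "(norm z)\<^sup>2 > 0" by simp
  have "(norm (A *v z))\<^sup>2 / (norm z)\<^sup>2 - 1 \<le> ric A q"
    unfolding ric_eq
  proof (rule cInf_greatest[OF ricset_ne])
    fix d assume "d \<in> ricset A q"
    then have "(norm (A *v z))\<^sup>2 \<le> (1 + d) * (norm z)\<^sup>2" using assms by (auto simp: ricset_def)
    then show "(norm (A *v z))\<^sup>2 / (norm z)\<^sup>2 - 1 \<le> d" using p by (simp add: field_simps)
  qed
  then show ?thesis using p by (simp add: field_simps)
qed

lemma ric_upper': "sparse q z \<Longrightarrow> norm (A *v z) \<le> sqrt (1 + ric A q) * norm z"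
proof -
  assume "sparse q z"
  from ric_upper[OF this, of A] have "sqrt ((norm (A *v z))\<^sup>2) \<le> sqrt ((1 + ric A q) * (norm z)\<^sup>2)"
    by (rule real_sqrt_le_mono)
  then show ?thesis by (simp add: real_sqrt_mult)
qed

lemma ric_lower': "sparse q z \<Longrightarrow> ric A q \<le> 1 \<Longrightarrow> sqrt (1 - ric A q) * norm z \<le> norm (A *v z)"
proof -
  assume "sparse q z" "ric A q \<le> 1"
  from ric_lower[OF this(1), of A] have "sqrt ((1 - ric A q) * (norm z)\<^sup>2) \<le> sqrt ((norm (A *v z))\<^sup>2)"
    by (rule real_sqrt_le_mono)
  then show ?thesis by (simp add: real_sqrt_mult)
qed

lemma norm_restr_sq: "(norm (restr T y))\<^sup>2 = (\<Sum>i\<in>T. (y $ i)\<^sup>2)"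
  unfolding power2_norm_eq_inner inner_vec_def restr_def
  by (simp add: power2_eq_square if_distrib sum.If_cases)

lemma topk:
  fixes y :: "real^'n"
  assumes "is_Lk k y \<Omega>" "card T \<le> k"
  shows "(\<Sum>i\<in>T. (y $ i)\<^sup>2) \<le> (\<Sum>i\<in>\<Omega>. (y $ i)\<^sup>2)"
proof -
  let ?g = "\<lambda>i. (y $ i)\<^sup>2"
  have ord: "\<And>i j. i \<in> \<Omega> \<Longrightarrow> j \<notin> \<Omega> \<Longrightarrow> ?g j \<le> ?g i"
    using assms(1) unfolding is_Lk_def by (metis abs_le_square_iff)
  have cO: "card \<Omega> = k" using assms(1) by (simp add: is_Lk_def)
  have c1: "card T = card (T \<inter> \<Omega>) + card (T - \<Omega>)"
    using card_Diff_subset_Int[of T \<Omega>] card_mono[of T "T \<inter> \<Omega>"] by simp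
  have c2: "card \<Omega> = card (T \<inter> \<Omega>) + card (\<Omega> - T)"
    using card_Diff_subset_Int[of \<Omega> T] card_mono[of \<Omega> "\<Omega> \<inter> T"] by (simp add: Int_commute)
  have "card (T - \<Omega>) \<le> card (\<Omega> - T)" using c1 c2 cO assms(2) by linarith
  then obtain f where f: "f ` (T - \<Omega>) \<subseteq> \<Omega> - T" "inj_on f (T - \<Omega>)"
    using card_le_inj[of "T - \<Omega>" "\<Omega> - T"] by auto
  have "(\<Sum>i\<in>T - \<Omega>. ?g i) \<le> (\<Sum>i\<in>T - \<Omega>. ?g (f i))"
    by (rule sum_mono) (use f ord in auto)
  also have "\<dots> = (\<Sum>i\<in>f ` (T - \<Omega>). ?g i)" by (simp add: sum.reindex f(2))
  also have "\<dots> \<le> (\<Sum>i\<in>\<Omega> - T. ?g i)" by (rule sum_mono2) (use f in auto)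
  finally have "(\<Sum>i\<in>T - \<Omega>. ?g i) \<le> (\<Sum>i\<in>\<Omega> - T. ?g i)" .
  moreover have "(\<Sum>i\<in>T. ?g i) = (\<Sum>i\<in>T \<inter> \<Omega>. ?g i) + (\<Sum>i\<in>T - \<Omega>. ?g i)"
    by (metis finite sum.Int_Diff)
  moreover have "(\<Sum>i\<in>\<Omega>. ?g i) = (\<Sum>i\<in>T \<inter> \<Omega>. ?g i) + (\<Sum>i\<in>\<Omega> - T. ?g i)"
    by (metis finite sum.Int_Diff Int_commute)
  ultimately show ?thesis by linarith
qed


lemma norm_line:
  fixes p q :: "'a::real_normed_vector"
  assumes "t1 < 0" "0 < t2"
  shows "norm p \<le> max (norm (p + t1 *\<^sub>R q)) (norm (p + t2 *\<^sub>R q))"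
proof -
  define a where "a = t2 / (t2 - t1)"
  define c where "c = - t1 / (t2 - t1)"
  have pos: "t2 - t1 > 0" using assms by simp
  have "t1 / (t2 - t1) \<le> 0" by (rule divide_nonpos_pos) (use assms pos in auto)
  then have a: "0 \<le> a" "0 \<le> c" using assms pos by (auto simp: a_def c_def)
  have "a + c = (t2 + - t1) / (t2 - t1)" unfolding a_def c_def
    by (rule add_divide_distrib[symmetric])
  then have a3: "a + c = 1" using pos by simp
  note a = a a3
  have "p = a *\<^sub>R (p + t1 *\<^sub>R q) + c *\<^sub>R (p + t2 *\<^sub>R q)"
  proof -
    have "a *\<^sub>R (p + t1 *\<^sub>R q) + c *\<^sub>R (p + t2 *\<^sub>R q) = (a + c) *\<^sub>R p + (a * t1 + c * t2) *\<^sub>R q"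
      by (simp add: algebra_simps)
    also have "a * t1 + c * t2 = 0" using assms by (simp add: a_def c_def field_simps)
    finally show ?thesis using a by simp
  qed
  then have "norm p \<le> norm (a *\<^sub>R (p + t1 *\<^sub>R q)) + norm (c *\<^sub>R (p + t2 *\<^sub>R q))"
    by (metis norm_triangle_ineq)
  also have "\<dots> = a * norm (p + t1 *\<^sub>R q) + c * norm (p + t2 *\<^sub>R q)" using a by simp
  also have "\<dots> \<le> a * max (norm (p + t1 *\<^sub>R q)) (norm (p + t2 *\<^sub>R q)) + c * max (norm (p + t1 *\<^sub>R q)) (norm (p + t2 *\<^sub>R q))"
    using a by (intro add_mono mult_left_mono) auto
  also have "\<dots> = (a + c) * max (norm (p + t1 *\<^sub>R q)) (norm (p + t2 *\<^sub>R q))" by (simp add: distrib_right)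
  also have "\<dots> = max (norm (p + t1 *\<^sub>R q)) (norm (p + t2 *\<^sub>R q))" using a by simp
  finally show ?thesis .
qed

lemma vertex_bound:
  fixes A :: "real^'n^'m" and b :: "real^'n"
  assumes H: "\<And>T. card T = k \<Longrightarrow> norm (A *v restr T b) \<le> M"
  shows "sum (\<lambda>i. w $ i) UNIV = real k \<Longrightarrow> \<forall>i. 0 \<le> w $ i \<and> w $ i \<le> 1 \<Longrightarrow> norm (A *v had b w) \<le> M"
proof (induction "card {i. 0 < w $ i \<and> w $ i < 1}" arbitrary: w rule: less_induct)
  case less
  define F where "F = {i. 0 < w $ i \<and> w $ i < 1}"
  have step: "norm (A *v had b (w + t *\<^sub>R d)) \<le> M"
    if "sum (\<lambda>l. d $ l) UNIV = 0" "\<forall>l. 0 \<le> (w + t *\<^sub>R d) $ l \<and> (w + t *\<^sub>R d) $ l \<le> 1"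
       "{l. 0 < (w + t *\<^sub>R d) $ l \<and> (w + t *\<^sub>R d) $ l < 1} \<subset> F" for t d
  proof (rule less.hyps)
    show "card {l. 0 < (w + t *\<^sub>R d) $ l \<and> (w + t *\<^sub>R d) $ l < 1} < card {i. 0 < w $ i \<and> w $ i < 1}"
      using psubset_card_mono[OF _ that(3)] F_def by simp
    show "(\<Sum>l\<in>UNIV. (w + t *\<^sub>R d) $ l) = real k"
      using that(1) less.prems(1) by (simp add: sum.distrib sum_distrib_left[symmetric])
    show "\<forall>l. 0 \<le> (w + t *\<^sub>R d) $ l \<and> (w + t *\<^sub>R d) $ l \<le> 1" by fact
  qed
  have lin: "A *v had b (w + t *\<^sub>R d) = A *v had b w + t *\<^sub>R (A *v had b d)" for t d
  proof -
    have "had b (w + t *\<^sub>R d) = had b w + t *\<^sub>R had b d"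
      by (simp add: had_def vec_eq_iff algebra_simps)
    then show ?thesis by (simp add: matrix_vector_right_distrib matrix_vector_mult_scaleR)
  qed
  show ?case
  proof (cases "F = {}")
    case True
    define T where "T = {i. w $ i = 1}"
    have w01: "w $ i = (if i \<in> T then 1 else 0)" for i
    proof -
      have nf: "\<not> (0 < w $ i \<and> w $ i < 1)" using True unfolding F_def by blast
      have b: "0 \<le> w $ i" "w $ i \<le> 1" using less.prems(2) by auto
      show ?thesis unfolding T_def using nf b by auto
    qed
    have "had b w = restr T b" by (simp add: had_def restr_def vec_eq_iff w01)
    moreover have "card T = k"
    proof -
      have "real k = (\<Sum>i\<in>UNIV. (if i \<in> T then 1 else 0))"
        using less.prems(1) by (simp add: w01 cong: if_cong)
      also have "\<dots> = real (card T)" by (simp add: sum.If_cases)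
      finally show ?thesis by simp
    qed
    ultimately show ?thesis using H by simp
  next
    case False
    then obtain i where i: "i \<in> F" by blast
    show ?thesis
    proof (cases "F = {i}")
      case True
      have wj: "w $ j = (if w $ j = 1 then 1 else 0)" if "j \<noteq> i" for j
        using True that less.prems(2)[rule_format, of j] unfolding F_def by force
      define c where "c = card ((UNIV - {i}) \<inter> {j. w $ j = 1})"
      have "(\<Sum>j\<in>UNIV. w $ j) = w $ i + (\<Sum>j\<in>UNIV - {i}. w $ j)"
        by (simp add: sum.remove)
      also have "(\<Sum>j\<in>UNIV - {i}. w $ j) = (\<Sum>j\<in>UNIV - {i}. (if w $ j = 1 then 1 else 0))"
        by (rule sum.cong) (use wj in auto)
      also have "\<dots> = real c" unfolding c_def
        by (simp add: sum.If_cases)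
      finally have "real k = w $ i + real c" using less.prems(1) by simp
      moreover have "0 < w $ i" "w $ i < 1" using i F_def by auto
      ultimately have r: "real c < real k" "real k < real (c + 1)" by simp_all
      have "c < k" using r(1) by (simp only: of_nat_less_iff)
      moreover have "k < c + 1" using r(2) by (simp only: of_nat_less_iff)
      ultimately show ?thesis by linarith
    next
      case False
      then obtain j where j: "j \<in> F" "j \<noteq> i" using i by blast
      define d :: "real^'n" where "d = (\<chi> l. if l = i then 1 else if l = j then -1 else 0)"
      have dsum: "sum (\<lambda>l. d $ l) UNIV = 0"
      proof -
        have "sum (\<lambda>l. d $ l) UNIV = d $ i + sum (\<lambda>l. d $ l) (UNIV - {i})" by (simp add: sum.remove)
        also have "sum (\<lambda>l. d $ l) (UNIV - {i}) = d $ j + sum (\<lambda>l. d $ l) (UNIV - {i} - {j})"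
          using j by (subst sum.remove[of _ j]) auto
        also have "sum (\<lambda>l. d $ l) (UNIV - {i} - {j}) = 0" by (rule sum.neutral) (auto simp: d_def)
        finally show ?thesis using j by (simp add: d_def)
      qed
      have wi: "0 < w $ i" "w $ i < 1" and wj: "0 < w $ j" "w $ j < 1" using i j F_def by auto
      have comp: "(w + t *\<^sub>R d) $ l = (if l = i then w $ i + t else if l = j then w $ j - t else w $ l)" for t l
        using j by (simp add: d_def)
      have feas: "\<forall>l. 0 \<le> (w + t *\<^sub>R d) $ l \<and> (w + t *\<^sub>R d) $ l \<le> 1"
        if "0 \<le> w $ i + t" "w $ i + t \<le> 1" "0 \<le> w $ j - t" "w $ j - t \<le> 1" for t
      proof (intro allI)
        fix l show "0 \<le> (w + t *\<^sub>R d) $ l \<and> (w + t *\<^sub>R d) $ l \<le> 1"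
          unfolding comp using that less.prems(2)[rule_format, of l] by auto
      qed
      have sub: "{l. 0 < (w + t *\<^sub>R d) $ l \<and> (w + t *\<^sub>R d) $ l < 1} \<subset> F"
        if "w $ i + t \<in> {0,1} \<or> w $ j - t \<in> {0,1}" for t
      proof -
        let ?G = "{l. 0 < (w + t *\<^sub>R d) $ l \<and> (w + t *\<^sub>R d) $ l < 1}"
        have "?G \<subseteq> F"
        proof
          fix l assume l: "l \<in> ?G"
          show "l \<in> F"
          proof (cases "l = i \<or> l = j")
            case True then show ?thesis using i j by auto
          next
            case False
            then have e: "(w + t *\<^sub>R d) $ l = w $ l" by (simp only: comp) simp
            from l have "0 < (w + t *\<^sub>R d) $ l \<and> (w + t *\<^sub>R d) $ l < 1" by blast
            then have "0 < w $ l \<and> w $ l < 1" unfolding e .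
            then show ?thesis unfolding F_def by blast
          qed
        qed
        moreover have "i \<notin> ?G \<or> j \<notin> ?G"
        proof -
          have ci: "(w + t *\<^sub>R d) $ i = w $ i + t" by (simp only: comp) simp
          have cj: "(w + t *\<^sub>R d) $ j = w $ j - t" using j(2) by (simp only: comp) simp
          show ?thesis using that ci cj by auto
        qed
        ultimately show ?thesis using i j by blast
      qed
      define t1 where "t1 = - min (w $ i) (1 - w $ j)"
      define t2 where "t2 = min (1 - w $ i) (w $ j)"
      have t1: "t1 < 0" and t2: "0 < t2" using wi wj by (auto simp: t1_def t2_def)
      have M1: "norm (A *v had b (w + t1 *\<^sub>R d)) \<le> M"
        apply (rule step[OF dsum feas sub])
        using wi wj by (auto simp: t1_def min_def)
      have M2: "norm (A *v had b (w + t2 *\<^sub>R d)) \<le> M"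
        apply (rule step[OF dsum feas sub])
        using wi wj by (auto simp: t2_def min_def)
      have "norm (A *v had b w) \<le> max (norm (A *v had b w + t1 *\<^sub>R (A *v had b d))) (norm (A *v had b w + t2 *\<^sub>R (A *v had b d)))"
        by (rule norm_line[OF t1 t2])
      then show ?thesis using M1 M2 by (simp add: lin)
    qed
  qed
qed


theorem lemma5:
  fixes A :: "real^'n^'m" and x u w what :: "real^'n" and \<eta> :: "real^'m"
    and k :: nat and S S' \<Omega>' :: "'n set"
  assumes kn: "k \<le> CARD('n)"
    and rip: "ric A (2 * k) < 1"
    and S: "is_Lk k x S"
    and \<Omega>': "is_Lk k (had u w) \<Omega>'"
    and S': "S' = supp (restr \<Omega>' (had u w))"
    and wfeas: "sum (\<lambda>i. w $ i) UNIV = real k" "\<forall>i. 0 \<le> w $ i \<and> w $ i \<le> 1"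
    and wmin: "\<forall>w'. sum (\<lambda>i. w' $ i) UNIV = real k \<and> (\<forall>i. 0 \<le> w' $ i \<and> w' $ i \<le> 1) \<longrightarrow>
        (norm ((A *v x + \<eta>) - A *v (had u w)))\<^sup>2 \<le> (norm ((A *v x + \<eta>) - A *v (had u w')))\<^sup>2"
    and what01: "\<forall>i. what $ i = 0 \<or> what $ i = 1"
    and whatsp: "sparse k what"
    and Swhat: "S \<subseteq> supp what"
  shows "norm (restr (S \<union> S') (restr S x - had u w))
           \<le> sqrt ((1 + ric A k) / (1 - ric A (2 * k))) * norm (had (restr S x - u) what)
             + 2 / sqrt (1 - ric A (2 * k)) * norm (A *v restr (- S) x + \<eta>)
             + 1 / sqrt (1 - ric A (2 * k)) * norm (A *v restr (- (S \<union> S')) (restr S x - had u w))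
       \<and> (\<forall>\<Omega>''. is_Lk k (u - restr S x) \<Omega>'' \<longrightarrow>
           norm (A *v restr (- (S \<union> S')) (restr S x - had u w))
             \<le> 2 * sqrt (1 + ric A k) * norm (restr \<Omega>'' (u - restr S x)))"
proof -
  define dk where "dk = ric A k"
  define d2 where "d2 = ric A (2 * k)"
  have dk0: "0 \<le> dk" unfolding dk_def by (rule ric_nonneg)
  have dk2: "dk \<le> d2" unfolding dk_def d2_def by (rule ric_mono) simp
  have d21: "d2 < 1" using rip d2_def by simp
  define T where "T = S \<union> S'"
  define v where "v = restr S x - had u w"
  define e where "e = had (restr S x - u) what"
  define \<eta>' where "\<eta>' = A *v restr (- S) x + \<eta>"
  define y where "y = A *v x + \<eta>"
  have cS: "card S = k" using S by (simp add: is_Lk_def)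
  have cO: "card \<Omega>' = k" using \<Omega>' by (simp add: is_Lk_def)
  have suppw: "supp what = S"
    using card_seteq[OF finite Swhat] whatsp cS by (simp add: sparse_def)
  have whatv: "what $ i = (if i \<in> S then 1 else 0)" for i
    using what01 suppw unfolding supp_def by (metis (mono_tags, lifting) mem_Collect_eq)
  have whatfeas: "sum (\<lambda>i. what $ i) UNIV = real k \<and> (\<forall>i. 0 \<le> what $ i \<and> what $ i \<le> 1)"
    using cS by (simp add: whatv sum.If_cases)
  have decx: "x = restr S x + restr (- S) x" by (simp add: restr_def vec_eq_iff)
  have Ax: "A *v x = A *v restr S x + A *v restr (- S) x"
    by (subst decx) (simp add: matrix_vector_right_distrib)
  have eq1: "restr S x - had u what = e"
    by (simp add: e_def had_def restr_def vec_eq_iff whatv)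
  have y1: "y - A *v had u what = A *v e + \<eta>'"
    unfolding y_def \<eta>'_def Ax eq1[symmetric] by (simp add: matrix_vector_mult_diff_distrib algebra_simps)
  have y2: "y - A *v had u w = A *v v + \<eta>'"
    unfolding y_def \<eta>'_def Ax v_def by (simp add: matrix_vector_mult_diff_distrib algebra_simps)
  have "(norm (y - A *v had u w))\<^sup>2 \<le> (norm (y - A *v had u what))\<^sup>2"
    using wmin whatfeas unfolding y_def by blast
  then have opt: "norm (A *v v + \<eta>') \<le> norm (A *v e + \<eta>')"
    using y1 y2 by (metis power2_le_imp_le norm_ge_zero)
  have "supp e \<subseteq> S" by (auto simp: supp_def e_def had_def whatv)
  then have "sparse k e" unfolding sparse_def using card_mono[OF finite] cS by metis
  then have Ae: "norm (A *v e) \<le> sqrt (1 + dk) * norm e" unfolding dk_def by (rule ric_upper')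
  have S'O: "S' \<subseteq> \<Omega>'" by (auto simp: S' supp_def restr_def)
  have "card T \<le> card S + card S'" unfolding T_def by (rule card_Un_le)
  also have "card S' \<le> k" using card_mono[OF finite S'O] cO by simp
  finally have cT: "card T \<le> 2 * k" using cS by simp
  have "supp (restr T v) \<subseteq> T" by (auto simp: supp_def restr_def)
  then have spT: "sparse (2 * k) (restr T v)" unfolding sparse_def using card_mono[OF finite] cT
    by (meson order_trans)
  have low: "sqrt (1 - d2) * norm (restr T v) \<le> norm (A *v restr T v)"
    unfolding d2_def by (rule ric_lower'[OF spT]) (use d21 d2_def in simp)
  have decv: "v = restr T v + restr (- T) v" by (simp add: restr_def vec_eq_iff)
  have AvT: "A *v restr T v = (A *v v + \<eta>') - \<eta>' - A *v restr (- T) v"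
  proof -
    have "A *v (restr T v + restr (- T) v) = A *v restr T v + A *v restr (- T) v"
      by (rule matrix_vector_right_distrib)
    then have eqv: "A *v v = A *v restr T v + A *v restr (- T) v" using decv by simp
    show ?thesis by (simp add: eqv)
  qed
  have "norm (A *v restr T v) \<le> norm (A *v v + \<eta>') + norm \<eta>' + norm (A *v restr (- T) v)"
  proof -
    have "norm ((A *v v + \<eta>') - \<eta>' - A *v restr (- T) v) \<le> norm ((A *v v + \<eta>') - \<eta>') + norm (A *v restr (- T) v)"
      by (rule norm_triangle_ineq4)
    moreover have "norm ((A *v v + \<eta>') - \<eta>') \<le> norm (A *v v + \<eta>') + norm \<eta>'"
      by (rule norm_triangle_ineq4)
    ultimately show ?thesis unfolding AvT by linarith
  qed
  also have "\<dots> \<le> norm (A *v e + \<eta>') + norm \<eta>' + norm (A *v restr (- T) v)" using opt by simp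
  also have "\<dots> \<le> norm (A *v e) + norm \<eta>' + norm \<eta>' + norm (A *v restr (- T) v)"
    using norm_triangle_ineq[of "A *v e" \<eta>'] by simp
  also have "\<dots> \<le> sqrt (1 + dk) * norm e + 2 * norm \<eta>' + norm (A *v restr (- T) v)" using Ae by simp
  finally have main: "sqrt (1 - d2) * norm (restr T v) \<le> sqrt (1 + dk) * norm e + 2 * norm \<eta>' + norm (A *v restr (- T) v)"
    using low by linarith
  have sp: "sqrt (1 - d2) > 0" using d21 by simp
  have part1: "norm (restr T v) \<le> sqrt ((1 + dk) / (1 - d2)) * norm e + 2 / sqrt (1 - d2) * norm \<eta>'
      + 1 / sqrt (1 - d2) * norm (A *v restr (- T) v)"
  proof -
    have "sqrt ((1 + dk) / (1 - d2)) * norm e + 2 / sqrt (1 - d2) * norm \<eta>' + 1 / sqrt (1 - d2) * norm (A *v restr (- T) v)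
      = (sqrt (1 + dk) * norm e + 2 * norm \<eta>' + norm (A *v restr (- T) v)) / sqrt (1 - d2)"
      unfolding real_sqrt_divide by (simp add: add_divide_distrib)
    then show ?thesis using main sp by (simp add: pos_le_divide_eq mult.commute)
  qed
  have part2: "norm (A *v restr (- T) v) \<le> 2 * sqrt (1 + dk) * norm (restr \<Omega>'' (u - restr S x))"
    if O2: "is_Lk k (u - restr S x) \<Omega>''" for \<Omega>''
  proof -
    define b where "b = restr (- T) u"
    define M where "M = sqrt (1 + dk) * norm (restr \<Omega>'' (u - restr S x))"
    have vb: "restr (- T) v = - had b w"
      by (simp add: vec_eq_iff restr_def v_def had_def b_def T_def)
    have neg: "A *v (- z) = - (A *v z)" for z :: "real^'n"
      using matrix_vector_mult_diff_distrib[of A 0 z] by simp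
    have H: "norm (A *v restr T' b) \<le> M" if cT': "card T' = k" for T'
    proof -
      have "supp (restr T' b) \<subseteq> T'" by (auto simp: supp_def restr_def)
      then have "sparse k (restr T' b)" unfolding sparse_def using card_mono[OF finite] cT'
        by metis
      then have a: "norm (A *v restr T' b) \<le> sqrt (1 + dk) * norm (restr T' b)"
        unfolding dk_def by (rule ric_upper')
      have "(norm (restr T' b))\<^sup>2 = (\<Sum>i\<in>T'. (b $ i)\<^sup>2)" by (rule norm_restr_sq)
      also have "\<dots> \<le> (\<Sum>i\<in>T'. ((u - restr S x) $ i)\<^sup>2)"
        by (rule sum_mono) (auto simp: b_def restr_def T_def)
      also have "\<dots> \<le> (\<Sum>i\<in>\<Omega>''. ((u - restr S x) $ i)\<^sup>2)" by (rule topk[OF O2]) (simp add: cT')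
      also have "\<dots> = (norm (restr \<Omega>'' (u - restr S x)))\<^sup>2" by (rule norm_restr_sq[symmetric])
      finally have "norm (restr T' b) \<le> norm (restr \<Omega>'' (u - restr S x))"
        by (rule power2_le_imp_le) simp
      then show ?thesis using a unfolding M_def
        by (meson order_trans mult_left_mono real_sqrt_ge_zero dk0 add_nonneg_nonneg zero_le_one)
    qed
    have "norm (A *v had b w) \<le> M"
      by (rule vertex_bound[OF H wfeas])
    then have "norm (A *v restr (- T) v) \<le> M" by (simp add: vb neg)
    moreover have "0 \<le> M" unfolding M_def using dk0 by simp
    ultimately show ?thesis unfolding M_def by simp
  qed
  show ?thesis
    using part1 part2 unfolding T_def v_def e_def \<eta>'_def dk_def d2_def by blast
qed

end
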